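(* Let $\mathcal T$ be an $n$-leaf tree ($n\ge 3$) with leaves $N=\{1,\dots,n\}$ and internal edges $I_1,\dots,I_{n-3}$, and let $\mathbf M$ be its $n\times(2n-3)$ Shapley transformation matrix. Then the null space of $\mathbf M$ has dimension $n-3$. A basis of it is given by the vectors $w_{I_1},\dots,w_{I_{n-3}}\in\mathbb R^{2n-3}$, one for each internal edge, with coordinates $$(w_{I_k})_i=\begin{cases}-\dfrac{f(i,I_k)-1}{(n-2)\,c(i,I_k)} & \text{if } 1\le i\le n,\\[2mm] 1 & \text{if } i=n+k,\\ 0 & \text{otherwise,}\end{cases}$$ for $k\in\{1,\dots,n-3\}$. Here the first $n$ coordinates correspond to the leaf edges and coordinate $n+j$ corresponds to the internal edge $I_j$.
   Context: An $n$-leaf tree here is an unrooted tree whose leaves are labeled by $N=\{1,\dots,n\}$ and whose internal vertices all have degree 3. Such a tree has $2n-3$ edges: the $n$ leaf edges (leaf edge $i$ is incident to leaf $i$) and the $n-3$ internal edges $I_1,\dots,I_{n-3}$. Split counts: for a leaf $i$ and an edge $k$, removing $k$ splits the tree into two subtrees. $c(i,k)$ is the number of leaves in the subtree containing $i$, and $f(i,k)=n-c(i,k)$ is the number of leaves in the other subtree. The Shapley transformation matrix $\mathbf M$ is the $n\times(2n-3)$ matrix with entries $\mathbf M[i,k]=\dfrac{f(i,k)}{n\,c(i,k)}$. Its rows are indexed by leaves $i$ and its columns by edges $k$, in the order leaf edges $1,\dots,n$ then $I_1,\dots,I_{n-3}$. Equivalently, $\mathbf M$ is the matrix such that the Shapley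 value of the tree game equals $\mathbf M$ times the vector of edge weights. The tree game assigns to a set of leaves $S$ the total weight of the minimal subtree spanning $S$. *)

theory Defs
  imports "Jordan_Normal_Form.Matrix_Kernel"
begin

text \<open>Undirected graphs on natural-number vertices: edges are 2-element vertex sets.\<close>

definition adj :: "nat set set \<Rightarrow> (nat \<times> nat) set" where
  "adj E = {(u, v). {u, v} \<in> E}"

definition deg :: "nat set set \<Rightarrow> nat \<Rightarrow> nat" where
  "deg E v = card {e \<in> E. v \<in> e}"

definition is_tree :: "nat set \<Rightarrow> nat set set \<Rightarrow> bool" where
  "is_tree V E \<longleftrightarrow> finite V \<and> V \<noteq> {} \<and>
     E \<subseteq> {{u, v} | u v. u \<in> V \<and> v \<in> V \<and> u \<noteq> v} \<and>
     (\<forall>u\<in>V. \<forall>v\<in>V. (u, v) \<in> (adj E)\<^sup>*) \<and>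
     card E = card V - 1"

definition n_leaf_tree :: "nat \<Rightarrow> nat set \<Rightarrow> nat set set \<Rightarrow> bool" where
  "n_leaf_tree n V E \<longleftrightarrow> is_tree V E \<and> {1..n} \<subseteq> V \<and>
     (\<forall>i\<in>{1..n}. deg E i = 1) \<and> (\<forall>v\<in>V - {1..n}. deg E v = 3)"

text \<open>Edge labelling: edges numbered 1..2n-3; edge i (1 \<le> i \<le> n) is the leaf edge of
  leaf i, edge n+j is the internal edge I_j.\<close>

definition edge_labelling :: "nat \<Rightarrow> nat set set \<Rightarrow> (nat \<Rightarrow> nat set) \<Rightarrow> bool" where
  "edge_labelling n E ed \<longleftrightarrow> bij_betw ed {1..2*n-3} E \<and> (\<forall>i\<in>{1..n}. i \<in> ed i)"

definition comp :: "nat set set \<Rightarrow> nat set \<Rightarrow> nat \<Rightarrow> nat set" where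
  "comp E k i = {v. (i, v) \<in> (adj (E - {k}))\<^sup>*}"

definition cnt :: "nat \<Rightarrow> nat set set \<Rightarrow> nat \<Rightarrow> nat set \<Rightarrow> nat" where
  "cnt n E i k = card ({1..n} \<inter> comp E k i)"

definition fcnt :: "nat \<Rightarrow> nat set set \<Rightarrow> nat \<Rightarrow> nat set \<Rightarrow> nat" where
  "fcnt n E i k = n - cnt n E i k"

text \<open>Shapley transformation matrix (0-indexed: row r is leaf r+1, column s is edge s+1).\<close>

definition shapley_mat :: "nat \<Rightarrow> nat set set \<Rightarrow> (nat \<Rightarrow> nat set) \<Rightarrow> real mat" where
  "shapley_mat n E ed = mat n (2*n-3) (\<lambda>(r, s).
     real (fcnt n E (r+1) (ed (s+1))) / (real n * real (cnt n E (r+1) (ed (s+1)))))"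

text \<open>The vector w_{I_k} (0-indexed coordinates: coordinate s is edge s+1).\<close>

definition null_vec :: "nat \<Rightarrow> nat set set \<Rightarrow> (nat \<Rightarrow> nat set) \<Rightarrow> nat \<Rightarrow> real vec" where
  "null_vec n E ed k = vec (2*n-3) (\<lambda>s.
     if s < n then - (real (fcnt n E (s+1) (ed (n+k))) - 1)
                     / ((real n - 2) * real (cnt n E (s+1) (ed (n+k))))
     else if s + 1 = n + k then 1 else 0)"

end

theory Submission
  imports Defs
begin

lemma adj_sym: "(x, y) \<in> adj F \<Longrightarrow> (y, x) \<in> adj F"
  unfolding adj_def by (auto simp: insert_commute)

lemma adj_rtrancl_sym: "(x, y) \<in> (adj F)\<^sup>* \<Longrightarrow> (y, x) \<in> (adj F)\<^sup>*"
proof (induction rule: rtrancl_induct)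
  case base thus ?case by simp
next
  case (step y z)
  have "(z, y) \<in> adj F" using adj_sym[OF step(2)] .
  thus ?case using step(3) by (rule converse_rtrancl_into_rtrancl)
qed

lemma conn_card:
  assumes fF: "finite F" and fW: "finite W" and r: "r \<in> W"
    and conn: "\<And>w. w \<in> W \<Longrightarrow> (r, w) \<in> (adj F)\<^sup>*"
  shows "card W \<le> card F + 1"
proof -
  let ?R = "adj F"
  define d where "d x = (LEAST k. (r, x) \<in> ?R ^^ k)" for x
  have dex: "(r, x) \<in> ?R ^^ (d x)" if "(r, x) \<in> ?R\<^sup>*" for x
  proof -
    from that obtain k where "(r, x) \<in> ?R ^^ k" using rtrancl_power by blast
    thus ?thesis unfolding d_def by (rule LeastI)
  qed
  have dle: "d x \<le> k" if "(r, x) \<in> ?R ^^ k" for x k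
    unfolding d_def using that by (rule Least_le)
  define P where "P w = (SOME p. (r, p) \<in> ?R ^^ (d w - 1) \<and> (p, w) \<in> ?R)" for w
  have Pp: "(r, P w) \<in> ?R ^^ (d w - 1) \<and> (P w, w) \<in> ?R \<and> d w \<ge> 1" if w: "w \<in> W - {r}" for w
  proof -
    have rw: "(r, w) \<in> ?R ^^ (d w)" using dex conn w by blast
    have "d w \<noteq> 0"
    proof
      assume "d w = 0"
      with rw have "w = r" by simp
      with w show False by simp
    qed
    then obtain m where m: "d w = Suc m" by (cases "d w") auto
    from rw m obtain p where "(r, p) \<in> ?R ^^ m" "(p, w) \<in> ?R" by auto
    hence "\<exists>p. (r, p) \<in> ?R ^^ (d w - 1) \<and> (p, w) \<in> ?R" using m by auto
    hence "(r, P w) \<in> ?R ^^ (d w - 1) \<and> (P w, w) \<in> ?R" unfolding P_def by (rule someI_ex)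
    thus ?thesis using m by simp
  qed
  have dP: "d (P w) = d w - 1" if w: "w \<in> W - {r}" for w
  proof -
    have a: "d (P w) \<le> d w - 1" using dle Pp[OF w] by blast
    have "(r, P w) \<in> ?R\<^sup>*" using Pp[OF w] relpow_imp_rtrancl by blast
    hence "(r, P w) \<in> ?R ^^ d (P w)" by (rule dex)
    hence "(r, w) \<in> ?R ^^ Suc (d (P w))" using Pp[OF w] by auto
    hence "d w \<le> Suc (d (P w))" by (rule dle)
    with a show ?thesis by simp
  qed
  define g where "g w = {P w, w}" for w
  have gF: "g ` (W - {r}) \<subseteq> F"
    using Pp unfolding g_def adj_def by auto
  have inj: "inj_on g (W - {r})"
  proof (rule inj_onI)
    fix w w' assume w: "w \<in> W - {r}" and w': "w' \<in> W - {r}" and eq: "g w = g w'"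
    show "w = w'"
    proof (rule ccontr)
      assume ne: "w \<noteq> w'"
      from eq ne have "P w = w' \<and> w = P w'" unfolding g_def by (auto simp: doubleton_eq_iff)
      hence "d w' = d w - 1" "d w = d w' - 1" using dP[OF w] dP[OF w'] by auto
      moreover have "d w \<ge> 1" "d w' \<ge> 1" using Pp[OF w] Pp[OF w'] by auto
      ultimately show False by simp
    qed
  qed
  have "card (W - {r}) \<le> card F" using card_inj_on_le[OF inj gF fF] .
  moreover have "card (W - {r}) = card W - 1" using r fW by simp
  moreover have "card W > 0" using r fW card_gt_0_iff by blast
  ultimately show ?thesis by simp
qed

lemma card_swap:
  fixes S :: "'a set" and E :: "'a set set"
  assumes "finite S" "finite E"
  shows "(\<Sum>x\<in>S. card {f\<in>E. x \<in> f}) = (\<Sum>f\<in>E. card (f \<inter> S))"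
proof -
  have "(\<Sum>x\<in>S. card {f\<in>E. x \<in> f}) = (\<Sum>x\<in>S. \<Sum>f\<in>E. if x \<in> f then 1 else 0)"
    using assms by (simp add: sum.inter_filter[symmetric])
  also have "\<dots> = (\<Sum>f\<in>E. \<Sum>x\<in>S. if x \<in> f then 1 else 0)" by (rule sum.swap)
  also have "\<dots> = (\<Sum>f\<in>E. card (f \<inter> S))"
  proof (rule sum.cong[OF refl])
    fix f assume "f \<in> E"
    have "f \<inter> S = {x\<in>S. x \<in> f}" by auto
    thus "(\<Sum>x\<in>S. if x \<in> f then 1 else 0) = card (f \<inter> S)"
      using assms by (simp add: sum.inter_filter[symmetric])
  qed
  finally show ?thesis .
qed

locale tctx =
  fixes V :: "nat set" and E :: "nat set set"
  assumes tree: "is_tree V E"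
begin

lemma finV: "finite V" using tree unfolding is_tree_def by (elim conjE)
lemma VnE: "V \<noteq> {}" using tree unfolding is_tree_def by (elim conjE)
lemma Esub: "E \<subseteq> {{u, v} | u v. u \<in> V \<and> v \<in> V \<and> u \<noteq> v}" using tree unfolding is_tree_def by (elim conjE)
lemma conn: "\<And>u v. u \<in> V \<Longrightarrow> v \<in> V \<Longrightarrow> (u, v) \<in> (adj E)\<^sup>*"
  using tree unfolding is_tree_def by (elim conjE) blast
lemma cardE: "card E = card V - 1" using tree unfolding is_tree_def by (elim conjE)

lemma edge_form: "f \<in> E \<Longrightarrow> \<exists>y z. f = {y, z} \<and> y \<noteq> z \<and> y \<in> V \<and> z \<in> V"
proof -
  assume "f \<in> E"
  hence "f \<in> {{u, v} | u v. u \<in> V \<and> v \<in> V \<and> u \<noteq> v}" using Esub by (rule subsetD[rotated])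
  then obtain y z where "f = {y, z}" "y \<in> V" "z \<in> V" "y \<noteq> z" by (auto simp only: mem_Collect_eq)
  thus ?thesis by blast
qed

lemma finE: "finite E"
proof -
  have "E \<subseteq> Pow V"
  proof
    fix f assume "f \<in> E"
    from edge_form[OF this] show "f \<in> Pow V" by auto
  qed
  thus ?thesis by (rule finite_subset) (simp add: finV)
qed

lemma reach_V:
  assumes "(x, y) \<in> (adj F)\<^sup>*" "F \<subseteq> E" "x \<in> V"
  shows "y \<in> V"
  using assms(1)
proof (induction rule: rtrancl_induct)
  case base thus ?case using assms(3) .
next
  case (step y z)
  from step(2) have "{y, z} \<in> F" unfolding adj_def by simp
  with assms(2) have "{y, z} \<in> E" by blast
  from edge_form[OF this] obtain a b where ab: "{y, z} = {a, b}" "a \<in> V" "b \<in> V" by blast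
  from ab(1) have "z = a \<or> z = b" by (simp add: doubleton_eq_iff) blast
  thus ?case using ab(2,3) by blast
qed

context
  fixes u v :: nat
  assumes e: "{u, v} \<in> E" and uv: "u \<noteq> v"
begin

abbreviation "E' \<equiv> E - {{u, v}}"
abbreviation "R' \<equiv> adj E'"

lemma uV: "u \<in> V" and vV: "v \<in> V"
  using edge_form[OF e] uv by (auto simp: doubleton_eq_iff)

lemma cover:
  assumes x: "x \<in> V"
  shows "(u, x) \<in> R'\<^sup>* \<or> (v, x) \<in> R'\<^sup>*"
proof -
  have "(u, x) \<in> (adj E)\<^sup>*" using conn uV x by blast
  thus ?thesis
  proof (induction rule: rtrancl_induct)
    case base thus ?case by simp
  next
    case (step y z)
    show ?case
    proof (cases "{y, z} = {u, v}")
      case True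
      hence "z = u \<or> z = v" by (auto simp: doubleton_eq_iff)
      thus ?thesis by auto
    next
      case False
      hence "(y, z) \<in> R'" using step(2) unfolding adj_def by auto
      thus ?thesis using step(3) by (meson rtrancl.rtrancl_into_rtrancl)
    qed
  qed
qed

lemma cardE': "card E' = card E - 1"
  using e finE by simp

lemma sep: "(u, v) \<notin> R'\<^sup>*"
proof
  assume uv': "(u, v) \<in> R'\<^sup>*"
  have all: "(u, x) \<in> R'\<^sup>*" if "x \<in> V" for x
    using cover[OF that] uv' by (meson rtrancl_trans)
  have "card V \<le> card E' + 1"
    by (rule conn_card[OF _ finV uV all]) (use finE in simp)
  moreover have "card V > 0" using finV VnE card_gt_0_iff by blast
  moreover have "card E > 0" using e finE card_gt_0_iff by blast
  ultimately show False using cardE' cardE by simp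
qed

lemma comp_eq:
  assumes "(x, y) \<in> R'\<^sup>*"
  shows "comp E {u, v} x = comp E {u, v} y"
proof -
  have yx: "(y, x) \<in> R'\<^sup>*" using adj_rtrancl_sym[OF assms] .
  have "(x, z) \<in> R'\<^sup>* \<longleftrightarrow> (y, z) \<in> R'\<^sup>*" for z
    using rtrancl_trans[OF yx, of z] rtrancl_trans[OF assms, of z] by blast
  thus ?thesis unfolding comp_def by simp
qed

lemma comp_self: "x \<in> comp E {u, v} x"
  unfolding comp_def by simp

lemma comp_sub: "x \<in> V \<Longrightarrow> comp E {u, v} x \<subseteq> V"
  unfolding comp_def using reach_V[of x _ E'] by auto

lemma comp_cases: "x \<in> V \<Longrightarrow> comp E {u, v} x = comp E {u, v} u \<or> comp E {u, v} x = comp E {u, v} v"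
proof -
  assume "x \<in> V"
  from cover[OF this] show ?thesis
  proof
    assume "(u, x) \<in> R'\<^sup>*"
    from comp_eq[OF this] show ?thesis by simp
  next
    assume "(v, x) \<in> R'\<^sup>*"
    from comp_eq[OF this] show ?thesis by simp
  qed
qed

lemma comp_disj: "comp E {u, v} u \<inter> comp E {u, v} v = {}"
proof -
  { fix y assume "(u, y) \<in> R'\<^sup>*" "(v, y) \<in> R'\<^sup>*"
    hence "(u, v) \<in> R'\<^sup>*" using adj_rtrancl_sym[of v y] rtrancl_trans[of u y R' v] by blast
    hence False using sep by simp }
  thus ?thesis unfolding comp_def by auto
qed

lemma comp_uv_ne: "comp E {u, v} u \<noteq> comp E {u, v} v"
  using comp_disj comp_self by auto

lemma leaf_count:
  assumes L: "L \<subseteq> V" and x: "x \<in> V" and y: "y \<in> V" and ne: "comp E {u, v} x \<noteq> comp E {u, v} y"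
  shows "card (L \<inter> comp E {u, v} x) + card (L \<inter> comp E {u, v} y) = card L"
proof -
  let ?S = "comp E {u, v} u" and ?T = "comp E {u, v} v"
  have cx: "comp E {u, v} x = ?S \<or> comp E {u, v} x = ?T" by (rule comp_cases[OF x])
  have cy: "comp E {u, v} y = ?S \<or> comp E {u, v} y = ?T" by (rule comp_cases[OF y])
  have st: "(comp E {u, v} x = ?S \<and> comp E {u, v} y = ?T) \<or> (comp E {u, v} x = ?T \<and> comp E {u, v} y = ?S)"
    using cx cy ne by metis
  have fL: "finite L" using L finV by (rule finite_subset)
  have cov: "L = (L \<inter> ?S) \<union> (L \<inter> ?T)"
  proof
    show "L \<subseteq> (L \<inter> ?S) \<union> (L \<inter> ?T)"
    proof
      fix z assume z: "z \<in> L"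
      hence "z \<in> V" using L by blast
      from cover[OF this] z show "z \<in> (L \<inter> ?S) \<union> (L \<inter> ?T)" unfolding comp_def by blast
    qed
  qed blast
  have "card L = card (L \<inter> ?S) + card (L \<inter> ?T)"
    by (subst cov, rule card_Un_disjoint) (use fL comp_disj in auto)
  moreover have "card (L \<inter> comp E {u, v} x) + card (L \<inter> comp E {u, v} y) = card (L \<inter> ?S) + card (L \<inter> ?T)"
    using st by auto
  ultimately show ?thesis by simp
qed

lemma reach_within:
  assumes "(x, w) \<in> R'\<^sup>*"
  shows "(x, w) \<in> (adj {f \<in> E'. f \<subseteq> comp E {u, v} x})\<^sup>*"
  using assms
proof (induction rule: rtrancl_induct)
  case base thus ?case by simp
next
  case (step y z)
  have "y \<in> comp E {u, v} x" "z \<in> comp E {u, v} x" using step(1,2) unfolding comp_def by auto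
  hence "(y, z) \<in> adj {f \<in> E'. f \<subseteq> comp E {u, v} x}" using step(2) unfolding adj_def by auto
  thus ?case using step(3) by (meson rtrancl.rtrancl_into_rtrancl)
qed

lemma side_card:
  assumes x: "x \<in> V"
  shows "card (comp E {u, v} x) \<le> card {f \<in> E'. f \<subseteq> comp E {u, v} x} + 1"
proof (rule conn_card)
  show "finite {f \<in> E'. f \<subseteq> comp E {u, v} x}" using finE by simp
  show "finite (comp E {u, v} x)" using comp_sub[OF x] finV by (rule finite_subset)
  show "x \<in> comp E {u, v} x" by (rule comp_self)
  fix w assume "w \<in> comp E {u, v} x"
  hence "(x, w) \<in> R'\<^sup>*" unfolding comp_def by simp
  thus "(x, w) \<in> (adj {f \<in> E'. f \<subseteq> comp E {u, v} x})\<^sup>*" by (rule reach_within)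
qed

lemma side_has_leaf:
  assumes L: "L \<subseteq> V" and deg3: "\<And>x. x \<in> V - L \<Longrightarrow> deg E x = 3"
  shows "L \<inter> comp E {u, v} u \<noteq> {}"
proof
  assume noleaf: "L \<inter> comp E {u, v} u = {}"
  let ?S = "comp E {u, v} u" and ?T = "comp E {u, v} v"
  let ?ES = "{f \<in> E'. f \<subseteq> ?S}" and ?ET = "{f \<in> E'. f \<subseteq> ?T}"
  have SV: "?S \<subseteq> V" and TV: "?T \<subseteq> V" using comp_sub uV vV by auto
  have fS: "finite ?S" using SV finV by (rule finite_subset)
  have fT: "finite ?T" using TV finV by (rule finite_subset)
  have h1: "E' = ?ES \<union> ?ET"
  proof
    show "E' \<subseteq> ?ES \<union> ?ET"
    proof
      fix f assume f: "f \<in> E'"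
      then obtain y z where yz: "f = {y, z}" "y \<in> V" using edge_form by blast
      have yz': "(y, z) \<in> R'" using f yz unfolding adj_def by auto
      have "y \<in> ?S \<or> y \<in> ?T" using comp_cases[OF yz(2)] comp_self by blast
      hence "f \<subseteq> ?S \<or> f \<subseteq> ?T"
      proof
        assume "y \<in> ?S"
        hence "(u, y) \<in> R'\<^sup>*" unfolding comp_def by simp
        hence "(u, z) \<in> R'\<^sup>*" using yz' by (rule rtrancl_into_rtrancl)
        hence "z \<in> ?S" unfolding comp_def by simp
        thus ?thesis using \<open>y \<in> ?S\<close> unfolding yz(1) by (intro disjI1) simp
      next
        assume "y \<in> ?T"
        hence "(v, y) \<in> R'\<^sup>*" unfolding comp_def by simp
        hence "(v, z) \<in> R'\<^sup>*" using yz' by (rule rtrancl_into_rtrancl)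
        hence "z \<in> ?T" unfolding comp_def by simp
        thus ?thesis using \<open>y \<in> ?T\<close> unfolding yz(1) by (intro disjI2) simp
      qed
      thus "f \<in> ?ES \<union> ?ET" using f by auto
    qed
  qed auto
  have h2: "?ES \<inter> ?ET = {}"
  proof -
    { fix f assume "f \<in> ?ES" "f \<in> ?ET"
      hence "f \<subseteq> ?S \<inter> ?T" "f \<in> E" by auto
      moreover obtain y z where "f = {y, z}" using edge_form \<open>f \<in> E\<close> by blast
      ultimately have False using comp_disj by auto }
    thus ?thesis by blast
  qed
  have fES: "finite ?ES" and fET: "finite ?ET" using finE by auto
  have h3: "card ?S \<le> card ?ES + 1" using side_card[OF uV] .
  have h4: "card ?T \<le> card {f \<in> E'. f \<subseteq> ?T} + 1" using side_card[OF vV] .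
  have VST: "V = ?S \<union> ?T"
  proof
    show "V \<subseteq> ?S \<union> ?T"
    proof
      fix x assume "x \<in> V"
      from cover[OF this] show "x \<in> ?S \<union> ?T" unfolding comp_def by blast
    qed
  qed (use SV TV in blast)
  have h5: "card V = card ?S + card ?T"
    by (subst VST, rule card_Un_disjoint) (use fS fT comp_disj in auto)
  have h6: "card E' = card ?ES + card ?ET"
    by (subst h1, rule card_Un_disjoint) (use fES fET h2 in auto)
  have "?S \<noteq> {}" using comp_self[of u] by blast
  hence Spos: "card ?S \<ge> 1" using fS by (simp add: Suc_le_eq card_gt_0_iff)
  have "?T \<noteq> {}" using comp_self[of v] by blast
  hence Tpos: "card ?T \<ge> 1" using fT by (simp add: Suc_le_eq card_gt_0_iff)
  have ES: "card ?ES + 1 = card ?S" using h3 h4 h5 h6 cardE' cardE Spos Tpos by linarith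
  \<comment> \<open>handshake\<close>
  have hs: "(\<Sum>x\<in>?S. deg E x) = (\<Sum>f\<in>E. card (f \<inter> ?S))"
    unfolding deg_def by (rule card_swap[OF fS finE])
  have "(\<Sum>f\<in>E. card (f \<inter> ?S)) = card ({u, v} \<inter> ?S) + (\<Sum>f\<in>E'. card (f \<inter> ?S))"
    using e finE by (simp add: sum.remove)
  also have "{u, v} \<inter> ?S = {u}"
  proof -
    have "v \<notin> ?S" using sep unfolding comp_def by simp
    thus ?thesis using comp_self[of u] by auto
  qed
  also have "(\<Sum>f\<in>E'. card (f \<inter> ?S)) = (\<Sum>f\<in>?ES. card (f \<inter> ?S)) + (\<Sum>f\<in>?ET. card (f \<inter> ?S))"
    by (subst h1, rule sum.union_disjoint) (use fES fET h2 in auto)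
  also have "(\<Sum>f\<in>?ES. card (f \<inter> ?S)) = (\<Sum>f\<in>?ES. 2)"
  proof (rule sum.cong[OF refl])
    fix f assume f: "f \<in> ?ES"
    then obtain y z where "f = {y, z}" "y \<noteq> z" using edge_form by blast
    thus "card (f \<inter> ?S) = 2" using f by auto
  qed
  also have "(\<Sum>f\<in>?ET. card (f \<inter> ?S)) = (\<Sum>f\<in>?ET. 0)"
  proof (rule sum.cong[OF refl])
    fix f assume f: "f \<in> ?ET"
    hence "f \<inter> ?S = {}" using comp_disj by auto
    thus "card (f \<inter> ?S) = 0" by simp
  qed
  finally have "(\<Sum>x\<in>?S. deg E x) = 1 + 2 * card ?ES" using hs by simp
  moreover have "(\<Sum>x\<in>?S. deg E x) = (\<Sum>x\<in>?S. 3)"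
    by (rule sum.cong[OF refl]) (use deg3 noleaf SV in auto)
  ultimately have "3 * card ?S = 1 + 2 * card ?ES" by simp
  with ES show False by simp
qed

end

end

lemma block_zero:
  fixes y :: "nat \<Rightarrow> real" and n :: nat
  assumes h: "\<And>r. r < n \<Longrightarrow> \<beta> * (\<Sum>s<n. y s) + \<gamma> * y r = 0"
    and nz: "real n * \<beta> + \<gamma> \<noteq> 0" and g: "\<gamma> \<noteq> 0" and r: "r < n"
  shows "y r = 0"
proof -
  have "(\<Sum>r<n. \<beta> * (\<Sum>s<n. y s) + \<gamma> * y r) = 0" using h by simp
  hence "real n * \<beta> * (\<Sum>s<n. y s) + \<gamma> * (\<Sum>s<n. y s) = 0"
    by (simp add: sum.distrib sum_distrib_left mult.assoc)
  hence "(real n * \<beta> + \<gamma>) * (\<Sum>s<n. y s) = 0" by (simp add: algebra_simps)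
  hence "(\<Sum>s<n. y s) = 0" using nz by simp
  with h[OF r] g show ?thesis by simp
qed

lemma block_sum:
  fixes y :: "nat \<Rightarrow> real"
  assumes "r < n"
  shows "(\<Sum>s<n. (if r = s then a else b) * y s) = b * (\<Sum>s<n. y s) + (a - b) * y r"
proof -
  have "(\<Sum>s<n. (if r = s then a else b) * y s) = (\<Sum>s<n. b * y s + (if r = s then (a - b) * y s else 0))"
    by (rule sum.cong) (auto simp: algebra_simps)
  also have "\<dots> = b * (\<Sum>s<n. y s) + (a - b) * y r"
    using assms by (simp add: sum.distrib sum_distrib_left)
  finally show ?thesis .
qed

lemma linalg:
  fixes n :: nat and M :: "real mat" and W :: "nat \<Rightarrow> real vec"
  assumes n3: "n \<ge> 3" and M: "M \<in> carrier_mat n (2*n-3)"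
  and blk: "\<And>r s. r < n \<Longrightarrow> s < n \<Longrightarrow> M $$ (r,s) =
      (if r = s then (real n - 1)/real n else 1/(real n * (real n - 1)))"
  and Wc: "\<And>k. k \<in> {1..n-3} \<Longrightarrow> W k \<in> carrier_vec (2*n-3)"
  and Wi: "\<And>k s. k \<in> {1..n-3} \<Longrightarrow> n \<le> s \<Longrightarrow> s < 2*n-3 \<Longrightarrow> W k $ s = (if s+1 = n+k then 1 else 0)"
  and Wk: "\<And>k. k \<in> {1..n-3} \<Longrightarrow> M *\<^sub>v W k = 0\<^sub>v n"
  shows "kernel_dim M = n-3 \<and> inj_on W {1..n-3} \<and> kernel.basis (2*n-3) M (W ` {1..n-3})"
proof -
  interpret K: kernel n "2*n-3" M by unfold_locales (rule M)
  note [simp] = module_vec_simps class_ring_simps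
  let ?I = "{1..n-3}"
  let ?B = "W ` ?I"
  have inj: "inj_on W ?I"
  proof (rule inj_onI)
    fix k l assume k: "k \<in> ?I" and l: "l \<in> ?I" and eq: "W k = W l"
    have "W k $ (n+k-1) = 1" using Wi[OF k, of "n+k-1"] k n3 by auto
    moreover have "W l $ (n+k-1) = (if k = l then 1 else 0)" using Wi[OF l, of "n+k-1"] k n3 by auto
    ultimately show "k = l" using eq by (auto split: if_splits)
  qed
  have Bker: "?B \<subseteq> mat_kernel M" using Wc Wk mat_kernelI[OF M] by blast
  have Bcar: "?B \<subseteq> carrier_vec (2*n-3)" using Wc by blast
  have indep: "K.lin_indpt ?B"
  proof
    assume "K.lin_dep ?B"
    hence "K.NC.lin_dep ?B" using K.lindep_same[OF Bker] by simp
    then obtain U a v where U: "finite U" "U \<subseteq> ?B" and lc: "K.NC.lincomb a U = 0\<^sub>v (2*n-3)"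
      and v: "v \<in> U" "a v \<noteq> 0"
      unfolding K.NC.lin_dep_def by auto
    from v U obtain k where k: "k \<in> ?I" "v = W k" by auto
    let ?i = "n+k-1"
    have i: "?i < 2*n-3" using k n3 by auto
    have "K.NC.lincomb a U $ ?i = (\<Sum>x\<in>U. a x * x $ ?i)"
      by (rule K.NC.lincomb_index[OF i]) (use U Bcar in auto)
    also have "\<dots> = (\<Sum>x\<in>U. if v = x then a x else 0)"
    proof (rule sum.cong[OF refl])
      fix x assume "x \<in> U"
      then obtain l where l: "l \<in> ?I" "x = W l" using U by auto
      have "x $ ?i = (if l = k then 1 else 0)" using Wi[OF l(1), of ?i] l k n3 by auto
      moreover have "(x = v) = (l = k)" using inj l k inj_on_eq_iff by metis
      ultimately show "a x * x $ ?i = (if v = x then a x else 0)" by auto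
    qed
    also have "\<dots> = a v" using U v by simp
    finally have "a v = 0" using lc i by simp
    with v show False by simp
  qed
  have span: "K.span ?B = mat_kernel M"
  proof
    show "K.span ?B \<subseteq> mat_kernel M" using K.Ker.span_is_subset2[OF Bker] by simp
    show "mat_kernel M \<subseteq> K.span ?B"
    proof
      fix x assume x: "x \<in> mat_kernel M"
      have xc: "x \<in> carrier_vec (2*n-3)" and Mx: "M *\<^sub>v x = 0\<^sub>v n" using mat_kernelD[OF M x] by auto
      define a where "a v = x $ (n + the_inv_into ?I W v - 1)" for v
      define l where "l = K.NC.lincomb a ?B"
      have lc: "l \<in> carrier_vec (2*n-3)" unfolding l_def using Bcar by (intro K.NC.lincomb_closed) auto
      have lcomp: "l $ i = (\<Sum>k\<in>?I. x $ (n+k-1) * W k $ i)" if i: "i < 2*n-3" for i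
      proof -
        have "l $ i = (\<Sum>v\<in>?B. a v * v $ i)" unfolding l_def
          by (rule K.NC.lincomb_index[OF i Bcar])
        also have "\<dots> = (\<Sum>k\<in>?I. a (W k) * W k $ i)" using sum.reindex[OF inj, of "\<lambda>v. a v * v $ i"] by (simp add: comp_def)
        also have "\<dots> = (\<Sum>k\<in>?I. x $ (n+k-1) * W k $ i)"
        proof (rule sum.cong[OF refl])
          fix k assume "k \<in> ?I"
          hence "the_inv_into ?I W (W k) = k" by (rule the_inv_into_f_f[OF inj])
          thus "a (W k) * W k $ i = x $ (n+k-1) * W k $ i" unfolding a_def by simp
        qed
        finally show ?thesis .
      qed
      have hi: "l $ i = x $ i" if i1: "n \<le> i" and i2: "i < 2*n-3" for i
      proof -
        have "l $ i = (\<Sum>k\<in>?I. if i + 1 - n = k then x $ i else 0)"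
          unfolding lcomp[OF i2]
        proof (rule sum.cong[OF refl])
          fix k assume k: "k \<in> ?I"
          have "W k $ i = (if i+1 = n+k then 1 else 0)" using Wi[OF k i1 i2] .
          moreover have "(i+1 = n+k) = (i+1-n = k)" using i1 by auto
          moreover have "i+1 = n+k \<Longrightarrow> n+k-1 = i" by simp
          ultimately show "x $ (n+k-1) * W k $ i = (if i + 1 - n = k then x $ i else 0)" by auto
        qed
        also have "\<dots> = x $ i"
        proof -
          have mem: "i+1-n \<in> ?I" using i1 i2 by auto
          show ?thesis using sum.delta'[of ?I "i+1-n" "\<lambda>_. x $ i"] mem by (simp only: finite_atLeastAtMost if_True)
        qed
        finally show ?thesis .
      qed
      define y where "y s = x $ s - l $ s" for s
      have yhi: "y s = 0" if "n \<le> s" "s < 2*n-3" for s using hi that y_def by simp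
      have ker: "(\<Sum>s<2*n-3. M $$ (r,s) * y s) = 0" if r: "r < n" for r
      proof -
        have e1: "(\<Sum>s<2*n-3. M $$ (r,s) * x $ s) = 0"
          using arg_cong[OF Mx, of "\<lambda>v. v $ r"] r M xc
          by (auto simp: scalar_prod_def row_def atLeast0LessThan)
        have e2: "(\<Sum>s<2*n-3. M $$ (r,s) * W k $ s) = 0" if k: "k \<in> ?I" for k
          using arg_cong[OF Wk[OF k], of "\<lambda>v. v $ r"] r M Wc[OF k]
          by (auto simp: scalar_prod_def row_def atLeast0LessThan)
        have "(\<Sum>s<2*n-3. M $$ (r,s) * l $ s) = (\<Sum>s<2*n-3. \<Sum>k\<in>?I. x $ (n+k-1) * (M $$ (r,s) * W k $ s))"
          by (rule sum.cong) (auto simp: lcomp sum_distrib_left algebra_simps)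
        also have "\<dots> = (\<Sum>k\<in>?I. x $ (n+k-1) * (\<Sum>s<2*n-3. M $$ (r,s) * W k $ s))"
          by (subst sum.swap) (simp add: sum_distrib_left)
        also have "\<dots> = 0" using e2 by simp
        finally have "(\<Sum>s<2*n-3. M $$ (r,s) * l $ s) = 0" .
        with e1 show ?thesis by (simp add: y_def algebra_simps sum_subtractf)
      qed
      have ylo: "y r = 0" if r: "r < n" for r
      proof (rule block_zero[where \<beta> = "1/(real n * (real n - 1))" and \<gamma> = "(real n - 1)/real n - 1/(real n * (real n - 1))"])
        fix r assume r: "r < n"
        have split: "{..<2*n-3} = {..<n} \<union> {n..<2*n-3}" using n3 by auto
        have "(\<Sum>s<2*n-3. M $$ (r,s) * y s) = (\<Sum>s<n. M $$ (r,s) * y s) + (\<Sum>s\<in>{n..<2*n-3}. M $$ (r,s) * y s)"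
          unfolding split by (rule sum.union_disjoint) auto
        also have "(\<Sum>s\<in>{n..<2*n-3}. M $$ (r,s) * y s) = 0" using yhi by simp
        also have "(\<Sum>s<n. M $$ (r,s) * y s) = (\<Sum>s<n. (if r = s then (real n - 1)/real n else 1/(real n * (real n - 1))) * y s)"
          using r blk by simp
        also have "\<dots> = 1/(real n * (real n - 1)) * (\<Sum>s<n. y s) + ((real n - 1)/real n - 1/(real n * (real n - 1))) * y r"
          by (rule block_sum[OF r])
        finally show "1/(real n * (real n - 1)) * (\<Sum>s<n. y s) + ((real n - 1)/real n - 1/(real n * (real n - 1))) * y r = 0"
          using ker[OF r] by simp
      next
        have a: "real n \<noteq> 0" "real n - 1 \<noteq> 0" using n3 by auto
        have g: "(real n - 1)/real n - 1/(real n * (real n - 1)) = (real n - 2)/(real n - 1)"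
          using a by (simp add: field_simps)
        have h: "real n * (1/(real n * (real n - 1))) = 1/(real n - 1)" using a by simp
        have "1/(real n - 1) + (real n - 2)/(real n - 1) = 1"
          using a by (simp add: field_simps)
        thus "real n * (1/(real n * (real n - 1))) + ((real n - 1)/real n - 1/(real n * (real n - 1))) \<noteq> 0"
          unfolding g h by simp
      next
        have "(real n - 1)/real n - 1/(real n * (real n - 1)) = (real n - 2)/(real n - 1)"
        proof -
          have a: "real n \<noteq> 0" "real n - 1 \<noteq> 0" using n3 by auto
          show ?thesis using a by (simp add: field_simps)
        qed
        thus "(real n - 1)/real n - 1/(real n * (real n - 1)) \<noteq> 0" using n3 by simp
      qed (rule r)
      have "x = l"
      proof (rule eq_vecI)
        fix i assume i: "i < dim_vec l"
        show "x $ i = l $ i"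
        proof (cases "i < n")
          case True thus ?thesis using ylo[OF True] y_def by simp
        next
          case False thus ?thesis using hi[of i] i lc by simp
        qed
      qed (use xc lc in simp)
      hence "x \<in> K.NC.span ?B" unfolding l_def K.NC.span_def using inj by auto
      thus "x \<in> K.span ?B" using K.span_same[OF Bker] by simp
    qed
  qed
  have basis: "K.basis ?B" using K.Ker.basis_def indep span Bker by blast
  have "K.dim = card ?B" by (rule K.Ker.dim_basis) (simp, rule basis)
  also have "\<dots> = n - 3" using card_image[OF inj] by simp
  finally show ?thesis using inj basis by simp
qed

lemma sum_part:
  fixes c :: "nat \<Rightarrow> nat" and n :: nat
  assumes A: "A \<subseteq> {1..n}" "A \<noteq> {}" "A \<noteq> {1..n}"
    and c: "\<And>j. j \<in> {1..n} \<Longrightarrow> c j = (if j \<in> A then card A else n - card A)"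
  shows "(\<Sum>j\<in>{1..n}. (real (n - c j) - 1) / real (c j)) = real n - 2"
proof -
  define a where "a = card A"
  have fA: "finite A" using A(1) finite_subset by blast
  have a1: "a \<ge> 1" using A(2) fA a_def by (simp add: Suc_le_eq card_gt_0_iff)
  have an: "a < n" using psubset_card_mono[of "{1..n}" A] A unfolding a_def by auto
  have cr: "card ({1..n} - A) = n - a" using card_Diff_subset[OF fA A(1)] a_def by simp
  have "(\<Sum>j\<in>{1..n}. (real (n - c j) - 1) / real (c j))
      = (\<Sum>j\<in>{1..n} - A. (real (n - c j) - 1) / real (c j)) + (\<Sum>j\<in>A. (real (n - c j) - 1) / real (c j))"
    by (rule sum.subset_diff[OF A(1)]) simp
  also have "(\<Sum>j\<in>A. (real (n - c j) - 1) / real (c j)) = (\<Sum>j\<in>A. (real (n - a) - 1) / real a)"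
    by (rule sum.cong) (use A c a_def in auto)
  also have "\<dots> = real n - real a - 1" using a1 an by (simp add: of_nat_diff a_def[symmetric])
  also have "(\<Sum>j\<in>{1..n} - A. (real (n - c j) - 1) / real (c j)) = (\<Sum>j\<in>{1..n} - A. (real a - 1) / real (n - a))"
    by (rule sum.cong) (use A c a_def an in auto)
  also have "\<dots> = real a - 1" using cr an by (simp add: of_nat_diff)
  finally show ?thesis by simp
qed

lemma row_identity:
  fixes n c :: nat
  assumes n3: "n \<ge> 3" and c1: "c \<ge> 1" and cn: "c \<le> n"
  shows "1/(real n * (real n - 1)) * (- 1) + ((real n - 1)/real n - 1/(real n * (real n - 1))) *
      (- (real (n - c) - 1) / ((real n - 2) * real c)) + real (n - c) / (real n * real c) = 0"
proof -
  have a: "real n \<noteq> 0" "real n - 1 \<noteq> 0" "real n - 2 \<noteq> 0" "real c \<noteq> 0" using n3 c1 by auto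
  have g: "(real n - 1)/real n - 1/(real n * (real n - 1)) = (real n - 2)/(real n - 1)"
    using a by (simp add: field_simps)
  have d: "real (n - c) = real n - real c" using cn by (simp add: of_nat_diff)
  have gw: "(real n - 2)/(real n - 1) * (- (real n - real c - 1) / ((real n - 2) * real c))
     = - (real n - real c - 1) / ((real n - 1) * real c)"
  proof -
    have "u/v * (- z / (u * y)) = - z / (v * y)"
      if "u \<noteq> 0" "v \<noteq> 0" "y \<noteq> 0" for u v y z :: real
      using that by (simp add: field_simps)
    thus ?thesis using a by blast
  qed
  have fin: "1/(x * v) * (- 1) + (- w / (v * y)) + (x - y) / (x * y) = 0"
    if "x \<noteq> 0" "v \<noteq> 0" "y \<noteq> 0" "v = x - 1" "w = x - y - 1" for x y v w :: real
  proof -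
    have "1/(x * v) * (- 1) + (- w / (v * y)) + (x - y) / (x * y)
       = (- y - x * w + v * (x - y)) / (x * v * y)"
      using that(1-3) by (simp add: field_simps)
    also have "- y - x * w + v * (x - y) = 0" unfolding that(4,5) by (simp add: algebra_simps)
    finally show ?thesis by simp
  qed
  show ?thesis unfolding g d gw using fin[OF a(1,2,4) refl refl] by simp
qed

lemma from_counts:
  fixes n :: nat and E :: "nat set set" and ed :: "nat \<Rightarrow> nat set"
  assumes n3: "n \<ge> 3"
  and GL: "\<And>i j. i \<in> {1..n} \<Longrightarrow> j \<in> {1..n} \<Longrightarrow> cnt n E j (ed i) = (if j = i then 1 else n - 1)"
  and GI: "\<And>k. k \<in> {1..n-3} \<Longrightarrow> \<exists>A. A \<subseteq> {1..n} \<and> A \<noteq> {} \<and> A \<noteq> {1..n} \<and>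
              (\<forall>j\<in>{1..n}. cnt n E j (ed (n+k)) = (if j \<in> A then card A else n - card A))"
  shows "kernel_dim (shapley_mat n E ed) = n - 3
    \<and> inj_on (null_vec n E ed) {1..n-3}
    \<and> kernel.basis (2*n-3) (shapley_mat n E ed) (null_vec n E ed ` {1..n-3})"
proof -
  let ?M = "shapley_mat n E ed"
  have Mc: "?M \<in> carrier_mat n (2*n-3)" by (simp add: shapley_mat_def)
  have Mij: "?M $$ (r,s) = real (n - cnt n E (r+1) (ed (s+1))) / (real n * real (cnt n E (r+1) (ed (s+1))))"
    if "r < n" "s < 2*n-3" for r s using that by (simp add: shapley_mat_def fcnt_def)
  have blk: "?M $$ (r,s) = (if r = s then (real n - 1)/real n else 1/(real n * (real n - 1)))"
    if r: "r < n" and s: "s < n" for r s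
  proof -
    have c: "cnt n E (r+1) (ed (s+1)) = (if r = s then 1 else n - 1)" using GL[of "s+1" "r+1"] r s by auto
    show ?thesis using Mij[of r s] r s n3 c by (auto simp: of_nat_diff)
  qed
  have Wc: "null_vec n E ed k \<in> carrier_vec (2*n-3)" for k by (simp add: null_vec_def)
  have Wi: "null_vec n E ed k $ s = (if s+1 = n+k then 1 else 0)" if "n \<le> s" "s < 2*n-3" for k s
    using that by (simp add: null_vec_def)
  have Wk: "?M *\<^sub>v null_vec n E ed k = 0\<^sub>v n" if k: "k \<in> {1..n-3}" for k
  proof -
    define cc where "cc j = cnt n E j (ed (n+k))" for j
    define w where "w s = - (real (n - cc (s+1)) - 1) / ((real n - 2) * real (cc (s+1)))" for s
    obtain A where A: "A \<subseteq> {1..n}" "A \<noteq> {}" "A \<noteq> {1..n}"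
      and Ac: "\<And>j. j \<in> {1..n} \<Longrightarrow> cc j = (if j \<in> A then card A else n - card A)"
      using GI[OF k] unfolding cc_def by blast
    have fA: "finite A" using A(1) finite_subset by blast
    have a1: "card A \<ge> 1" using A(2) fA by (simp add: Suc_le_eq card_gt_0_iff)
    have an: "card A < n" using psubset_card_mono[of "{1..n}" A] A by auto
    have cc1: "1 \<le> cc j" "cc j \<le> n" if "j \<in> {1..n}" for j using Ac[OF that] a1 an by auto
    have wv: "null_vec n E ed k $ s = w s" if "s < n" for s
      using that n3 by (simp add: null_vec_def w_def cc_def fcnt_def)
    have sumw: "(\<Sum>s<n. w s) = -1"
    proof -
      have "(\<Sum>s<n. w s) = (\<Sum>s<n. - (1/(real n - 2)) * ((real (n - cc (s+1)) - 1) / real (cc (s+1))))"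
      proof -
        have g: "- p / (q * c) = - (1/q) * (p / c)" for p q c :: real by (simp add: divide_inverse mult_ac)
        show ?thesis unfolding w_def by (rule sum.cong[OF refl]) (rule g)
      qed
      also have "\<dots> = - (1/(real n - 2)) * (\<Sum>s<n. (real (n - cc (Suc s)) - 1) / real (cc (Suc s)))"
        by (simp add: sum_distrib_left)
      also have "(\<Sum>s<n. (real (n - cc (Suc s)) - 1) / real (cc (Suc s))) = (\<Sum>j\<in>{1..n}. (real (n - cc j) - 1) / real (cc j))"
        by (simp add: sum.atLeast1_atMost_eq)
      also have "\<dots> = real n - 2" by (rule sum_part[OF A Ac])
      finally show ?thesis using n3 by simp
    qed
    show ?thesis
    proof (rule eq_vecI)
      fix r assume "r < dim_vec (0\<^sub>v n :: real vec)"
      hence r: "r < n" by simp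
      have split: "{0..<2*n-3} = {..<n} \<union> {n..<2*n-3}" using n3 by auto
      have "(?M *\<^sub>v null_vec n E ed k) $ r = (\<Sum>s\<in>{0..<2*n-3}. ?M $$ (r,s) * null_vec n E ed k $ s)"
        using r Mc by (simp add: scalar_prod_def row_def null_vec_def)
      also have "\<dots> = (\<Sum>s<n. ?M $$ (r,s) * null_vec n E ed k $ s) + (\<Sum>s\<in>{n..<2*n-3}. ?M $$ (r,s) * null_vec n E ed k $ s)"
        unfolding split by (rule sum.union_disjoint) auto
      also have "(\<Sum>s<n. ?M $$ (r,s) * null_vec n E ed k $ s) = (\<Sum>s<n. (if r = s then (real n - 1)/real n else 1/(real n * (real n - 1))) * w s)"
        by (rule sum.cong) (use r blk wv in auto)
      also have "\<dots> = 1/(real n * (real n - 1)) * (- 1) + ((real n - 1)/real n - 1/(real n * (real n - 1))) * w r"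
        using block_sum[OF r] sumw by simp
      also have "(\<Sum>s\<in>{n..<2*n-3}. ?M $$ (r,s) * null_vec n E ed k $ s) = (\<Sum>s\<in>{n..<2*n-3}. if n+k-1 = s then ?M $$ (r,s) else 0)"
        by (rule sum.cong) (use Wi k in auto)
      also have "\<dots> = ?M $$ (r, n+k-1)"
      proof -
        have mem: "n+k-1 \<in> {n..<2*n-3}" using k n3 by auto
        show ?thesis using sum.delta'[of "{n..<2*n-3}" "n+k-1" "\<lambda>s. ?M $$ (r,s)"] mem
          by (simp only: finite_atLeastLessThan if_True)
      qed
      also have "\<dots> = real (n - cc (r+1)) / (real n * real (cc (r+1)))"
      proof -
        have "n+k-1 < 2*n-3" "n+k-1+1 = n+k" using k n3 by auto
        thus ?thesis using Mij[of r "n+k-1"] r unfolding cc_def by simp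
      qed
      finally have "(?M *\<^sub>v null_vec n E ed k) $ r = 1/(real n * (real n - 1)) * (- 1) + ((real n - 1)/real n - 1/(real n * (real n - 1))) *
      (- (real (n - cc (r+1)) - 1) / ((real n - 2) * real (cc (r+1)))) + real (n - cc (r+1)) / (real n * real (cc (r+1)))"
        by (simp add: w_def)
      also have "\<dots> = 0" by (rule row_identity[OF n3]) (use cc1[of "r+1"] r in auto)
      finally show "(?M *\<^sub>v null_vec n E ed k) $ r = 0\<^sub>v n $ r" using r by simp
    qed (use Mc in simp)
  qed
  show ?thesis by (rule linalg[OF n3 Mc blk Wc Wi Wk])
qed

theorem theorem6:
  fixes n :: nat and V :: "nat set" and E :: "nat set set" and ed :: "nat \<Rightarrow> nat set"
  assumes "n \<ge> 3"
    and "n_leaf_tree n V E"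
    and "edge_labelling n E ed"
  shows "kernel_dim (shapley_mat n E ed) = n - 3
    \<and> inj_on (null_vec n E ed) {1..n-3}
    \<and> kernel.basis (2*n-3) (shapley_mat n E ed) (null_vec n E ed ` {1..n-3})"
proof -
  note n3 = assms(1)
  let ?L = "{1..n}"
  have tree: "is_tree V E" and LV: "?L \<subseteq> V" and deg1: "\<And>i. i \<in> ?L \<Longrightarrow> deg E i = 1"
    and deg3: "\<And>x. x \<in> V - ?L \<Longrightarrow> deg E x = 3"
    using assms(2) unfolding n_leaf_tree_def by auto
  have bij: "bij_betw ed {1..2*n-3} E" and lab: "\<And>i. i \<in> ?L \<Longrightarrow> i \<in> ed i"
    using assms(3) unfolding edge_labelling_def by auto
  interpret tctx V E by unfold_locales (rule tree)
  have edE: "ed j \<in> E" if "j \<in> {1..2*n-3}" for j using bij_betw_apply[OF bij that] .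
  have GL: "cnt n E j (ed i) = (if j = i then 1 else n - 1)" if i: "i \<in> ?L" and j: "j \<in> ?L" for i j
  proof -
    have eE: "ed i \<in> E" using edE i n3 by auto
    obtain y z where yz: "ed i = {y, z}" "y \<noteq> z" using edge_form[OF eE] by blast
    obtain w where w: "ed i = {i, w}" "i \<noteq> w"
    proof (cases "i = y")
      case True thus ?thesis using that yz by blast
    next
      case False
      hence "i = z" using lab[OF i] yz by auto
      thus ?thesis using that yz by (auto simp: insert_commute)
    qed
    have e: "{i, w} \<in> E" using eE w by simp
    have S: "{f \<in> E. i \<in> f} = {{i, w}}"
    proof -
      have c1: "card {f \<in> E. i \<in> f} = 1" using deg1[OF i] unfolding deg_def .
      then obtain f0 where "{f \<in> E. i \<in> f} = {f0}" by (rule card_1_singletonE)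
      moreover have "{i, w} \<in> {f \<in> E. i \<in> f}" using e by simp
      ultimately show ?thesis by auto
    qed
    have ci: "comp E {i, w} i = {i}"
    proof -
      { fix x assume "(i, x) \<in> (adj (E - {{i, w}}))\<^sup>*"
        hence "x = i"
        proof (induction rule: rtrancl_induct)
          case base thus ?case by simp
        next
          case (step x x')
          from step(2) have "{x, x'} \<in> E - {{i, w}}" unfolding adj_def by simp
          with step(3) have "{i, x'} \<in> E" "{i, x'} \<noteq> {i, w}" by auto
          hence "{i, x'} \<in> {f \<in> E. i \<in> f}" by simp
          with S \<open>{i, x'} \<noteq> {i, w}\<close> show ?case by simp
        qed }
      thus ?thesis unfolding comp_def by auto
    qed
    have iV: "i \<in> V" and jV: "j \<in> V" using LV i j by auto
    show ?thesis
    proof (cases "j = i")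
      case True
      have "?L \<inter> {i} = {i}" using i by auto
      thus ?thesis using True ci w(1) unfolding cnt_def by simp
    next
      case False
      have ne: "comp E {i, w} j \<noteq> comp E {i, w} i"
        using ci comp_self[OF e w(2), of j] False by auto
      have "card (?L \<inter> comp E {i, w} j) + card (?L \<inter> comp E {i, w} i) = card ?L"
        by (rule leaf_count[OF e w(2) LV jV iV ne])
      moreover have "?L \<inter> {i} = {i}" using i by auto
      ultimately have "card (?L \<inter> comp E {i, w} j) = n - 1" using ci by simp
      thus ?thesis using False w(1) unfolding cnt_def by simp
    qed
  qed
  have GI: "\<exists>A. A \<subseteq> ?L \<and> A \<noteq> {} \<and> A \<noteq> ?L \<and>
              (\<forall>j\<in>?L. cnt n E j (ed (n+k)) = (if j \<in> A then card A else n - card A))"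
    if k: "k \<in> {1..n-3}" for k
  proof -
    have eE: "ed (n+k) \<in> E" using edE k n3 by auto
    obtain u v where uv: "ed (n+k) = {u, v}" "u \<noteq> v" using edge_form[OF eE] by blast
    have e: "{u, v} \<in> E" using eE uv by simp
    have e': "{v, u} \<in> E" using e by (simp add: insert_commute)
    define A where "A = ?L \<inter> comp E {u, v} u"
    have A1: "A \<noteq> {}" unfolding A_def by (rule side_has_leaf[OF e uv(2) LV deg3])
    have "?L \<inter> comp E {v, u} v \<noteq> {}" by (rule side_has_leaf[OF e' uv(2)[symmetric] LV deg3])
    hence B1: "?L \<inter> comp E {u, v} v \<noteq> {}" by (simp add: insert_commute)
    have A2: "A \<noteq> ?L"
    proof
      assume "A = ?L"
      hence "?L \<subseteq> comp E {u, v} u" unfolding A_def by auto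
      thus False using B1 comp_disj[OF e uv(2)] by auto
    qed
    have cntA: "cnt n E j (ed (n+k)) = (if j \<in> A then card A else n - card A)" if j: "j \<in> ?L" for j
    proof (cases "j \<in> A")
      case True
      hence "(u, j) \<in> (adj (E - {{u, v}}))\<^sup>*" unfolding A_def comp_def by simp
      hence "comp E {u, v} u = comp E {u, v} j" by (rule comp_eq[OF e uv(2)])
      thus ?thesis using True uv(1) unfolding cnt_def A_def by simp
    next
      case False
      have jV: "j \<in> V" using LV j by auto
      have ne: "comp E {u, v} j \<noteq> comp E {u, v} u"
        using False j comp_self[OF e uv(2), of j] unfolding A_def by auto
      have "card (?L \<inter> comp E {u, v} j) + card A = card ?L"
        unfolding A_def by (rule leaf_count[OF e uv(2) LV jV uV[OF e uv(2)] ne])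
      hence "card (?L \<inter> comp E {u, v} j) = n - card A" by simp
      thus ?thesis using False uv(1) unfolding cnt_def by simp
    qed
    show ?thesis using A1 A2 cntA unfolding A_def by blast
  qed
  show ?thesis by (rule from_counts[OF n3 GL GI])
qed

end
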